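(* Let $\mathcal{P}$ be a nondegenerate partial geometry $pg(s,t,t+1)$ with $s\ge 2t+1$. If the point graph of $\mathcal{P}$ is $3$-e.c., then $$s^2-(t^3+2t^2+2t)s+2t^4+4t^3+t^2-t\le 0.$$
   Context: A partial geometry $pg(s,t,\alpha)$ is an incidence structure of points and lines such that any two distinct points lie on at most one common line, every line contains exactly $s+1$ points, every point lies on exactly $t+1$ lines, and for every point $p$ and line $L$ with $p$ not on $L$ there are exactly $\alpha$ lines through $p$ meeting $L$. It is nondegenerate if $s\ge2$, $t\ge1$, $\alpha\ge1$. (A $pg(s,t,t+1)$ is the dual of a $2$-$(v,t+1,1)$ design.) The point graph has the points as vertices, two distinct points adjacent iff collinear. A graph with vertex set $V$ is $n$-e.c. if for every pair of disjoint subsets $A,B\subseteq V$ with $|A\cup B|=n$ (either may be empty) there is a vertex $z\notin A\cup B$ adjacent to every vertex of $A$ and to no vertex of $B$. *)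

theory Defs
  imports Main
begin

definition partial_geometry ::
  "'a set \<Rightarrow> 'b set \<Rightarrow> ('a \<Rightarrow> 'b \<Rightarrow> bool) \<Rightarrow> nat \<Rightarrow> nat \<Rightarrow> nat \<Rightarrow> bool" where
  "partial_geometry P L I s t \<alpha> \<longleftrightarrow>
     P \<noteq> {} \<and>
     (\<forall>p\<in>P. \<forall>q\<in>P. p \<noteq> q \<longrightarrow> card {l\<in>L. I p l \<and> I q l} \<le> 1) \<and>
     (\<forall>l\<in>L. card {p\<in>P. I p l} = s + 1) \<and>
     (\<forall>p\<in>P. card {l\<in>L. I p l} = t + 1) \<and>
     (\<forall>p\<in>P. \<forall>l\<in>L. \<not> I p l \<longrightarrow>
        card {m\<in>L. I p m \<and> (\<exists>q\<in>P. I q m \<and> I q l)} = \<alpha>)"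

definition nondegenerate_pg ::
  "'a set \<Rightarrow> 'b set \<Rightarrow> ('a \<Rightarrow> 'b \<Rightarrow> bool) \<Rightarrow> nat \<Rightarrow> nat \<Rightarrow> nat \<Rightarrow> bool" where
  "nondegenerate_pg P L I s t \<alpha> \<longleftrightarrow>
     partial_geometry P L I s t \<alpha> \<and> s \<ge> 2 \<and> t \<ge> 1 \<and> \<alpha> \<ge> 1"

definition point_graph_adj ::
  "'a set \<Rightarrow> 'b set \<Rightarrow> ('a \<Rightarrow> 'b \<Rightarrow> bool) \<Rightarrow> 'a \<Rightarrow> 'a \<Rightarrow> bool" where
  "point_graph_adj P L I p q \<longleftrightarrow> p \<in> P \<and> q \<in> P \<and> p \<noteq> q \<and> (\<exists>l\<in>L. I p l \<and> I q l)"

definition n_ec :: "nat \<Rightarrow> 'a set \<Rightarrow> ('a \<Rightarrow> 'a \<Rightarrow> bool) \<Rightarrow> bool" where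
  "n_ec n V adj \<longleftrightarrow>
     (\<forall>A B. A \<subseteq> V \<longrightarrow> B \<subseteq> V \<longrightarrow> A \<inter> B = {} \<longrightarrow> finite (A \<union> B) \<longrightarrow> card (A \<union> B) = n \<longrightarrow>
        (\<exists>z\<in>V - (A \<union> B). (\<forall>a\<in>A. adj z a) \<and> (\<forall>b\<in>B. \<not> adj z b)))"

end

theory Submission
  imports Defs
begin

lemma double_count:
  assumes "finite A" "finite B"
  shows "(\<Sum>a\<in>A. card {b\<in>B. R a b}) = (\<Sum>b\<in>B. card {a\<in>A. R a b})"
proof -
  have "(\<Sum>a\<in>A. card {b\<in>B. R a b}) = (\<Sum>a\<in>A. \<Sum>b\<in>B. if R a b then 1 else 0)"
    using assms by (simp add: sum.If_cases Collect_conj_eq)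
  also have "\<dots> = (\<Sum>b\<in>B. \<Sum>a\<in>A. if R a b then 1 else 0)" by (rule sum.swap)
  also have "\<dots> = (\<Sum>b\<in>B. card {a\<in>A. R a b})"
    using assms by (simp add: sum.If_cases Collect_conj_eq)
  finally show ?thesis .
qed

locale pgt =
  fixes P :: "'a set" and L :: "'b set" and I :: "'a \<Rightarrow> 'b \<Rightarrow> bool" and s t :: nat
  assumes pg: "partial_geometry P L I s t (t+1)" and s2: "s \<ge> 2" and t1: "t \<ge> 1"
begin

definition pts where "pts l = {p\<in>P. I p l}"
definition lns where "lns p = {l\<in>L. I p l}"

lemma Pne: "P \<noteq> {}" using pg unfolding partial_geometry_def by blast

lemma two_pts: "p\<in>P \<Longrightarrow> q\<in>P \<Longrightarrow> p \<noteq> q \<Longrightarrow> card {l\<in>L. I p l \<and> I q l} \<le> 1"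
  using pg unfolding partial_geometry_def by blast

lemma pts_card: "l\<in>L \<Longrightarrow> card (pts l) = s+1"
  using pg unfolding partial_geometry_def pts_def by blast

lemma lns_card: "p\<in>P \<Longrightarrow> card (lns p) = t+1"
  using pg unfolding partial_geometry_def lns_def by blast

lemma pts_fin: "l\<in>L \<Longrightarrow> finite (pts l)"
  using pts_card by (metis card.infinite add_is_0 one_neq_zero)

lemma lns_fin: "p\<in>P \<Longrightarrow> finite (lns p)"
  using lns_card by (metis card.infinite add_is_0 one_neq_zero)

lemma lns_ne: "p\<in>P \<Longrightarrow> \<exists>l\<in>L. I p l"
  using lns_card[of p] unfolding lns_def by (metis (no_types, lifting) Collect_empty_eq card.empty add_is_0 one_neq_zero)

lemma pts_ne: "l\<in>L \<Longrightarrow> \<exists>p\<in>P. I p l"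
  using pts_card[of l] unfolding pts_def by (metis (no_types, lifting) Collect_empty_eq card.empty add_is_0 one_neq_zero)

lemma uniq_line:
  assumes "p\<in>P" "q\<in>P" "p\<noteq>q" "l\<in>L" "m\<in>L" "I p l" "I q l" "I p m" "I q m"
  shows "l = m"
proof -
  have f: "finite {l\<in>L. I p l \<and> I q l}"
    using lns_fin[OF assms(1)] unfolding lns_def by (rule rev_finite_subset) auto
  from two_pts[OF assms(1-3)] f show ?thesis
    using card_le_Suc0_iff_eq[OF f] assms by auto
qed

lemma all_meet:
  assumes "p\<in>P" "l\<in>L" "\<not> I p l" "m\<in>L" "I p m"
  shows "\<exists>q\<in>P. I q m \<and> I q l"
proof -
  let ?S = "{m\<in>L. I p m \<and> (\<exists>q\<in>P. I q m \<and> I q l)}"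
  have c: "card ?S = t+1" using pg assms unfolding partial_geometry_def by blast
  have sub: "?S \<subseteq> lns p" unfolding lns_def by auto
  have "?S = lns p"
    by (rule card_subset_eq[OF lns_fin[OF assms(1)] sub]) (simp add: c lns_card assms)
  thus ?thesis using assms unfolding lns_def by auto
qed

lemma lines_meet:
  assumes "l\<in>L" "m\<in>L"
  shows "\<exists>q\<in>P. I q l \<and> I q m"
proof (rule ccontr)
  assume n: "\<not> ?thesis"
  obtain p where p: "p\<in>P" "I p m" using pts_ne[OF assms(2)] by blast
  hence "\<not> I p l" using n by blast
  from all_meet[OF p(1) assms(1) this assms(2) p(2)] n show False by blast
qed

lemma L_fin: "finite L"
proof -
  obtain p0 where p0: "p0\<in>P" using Pne by blast
  obtain l0 where l0: "l0\<in>L" "I p0 l0" using lns_ne[OF p0] by blast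
  have "L \<subseteq> (\<Union>q\<in>pts l0. lns q)"
    using lines_meet[OF l0(1)] unfolding pts_def lns_def by blast
  moreover have "finite (\<Union>q\<in>pts l0. lns q)"
    using pts_fin[OF l0(1)] lns_fin unfolding pts_def by auto
  ultimately show ?thesis by (rule finite_subset)
qed

lemma P_fin: "finite P"
proof -
  have "P \<subseteq> (\<Union>l\<in>L. pts l)" using lns_ne unfolding pts_def by blast
  moreover have "finite (\<Union>l\<in>L. pts l)" using L_fin pts_fin by auto
  ultimately show ?thesis by (rule finite_subset)
qed

lemma incid: "card P * (t+1) = card L * (s+1)"
proof -
  have "(\<Sum>p\<in>P. card {l\<in>L. I p l}) = (\<Sum>l\<in>L. card {p\<in>P. I p l})"
    by (rule double_count[OF P_fin L_fin])
  moreover have "(\<Sum>p\<in>P. card {l\<in>L. I p l}) = card P * (t+1)"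
    using lns_card unfolding lns_def by simp
  moreover have "(\<Sum>l\<in>L. card {p\<in>P. I p l}) = card L * (s+1)"
    using pts_card unfolding pts_def by simp
  ultimately show ?thesis by simp
qed

lemma L_card: "card L = 1 + (s+1)*t"
proof -
  obtain p0 where p0: "p0\<in>P" using Pne by blast
  obtain l0 where l0: "l0\<in>L" "I p0 l0" using lns_ne[OF p0] by blast
  have eq: "L - {l0} = (\<Union>q\<in>pts l0. lns q - {l0})"
    using lines_meet[OF l0(1)] unfolding pts_def lns_def by blast
  have "card (\<Union>q\<in>pts l0. lns q - {l0}) = (\<Sum>q\<in>pts l0. card (lns q - {l0}))"
  proof (rule card_UN_disjoint)
    show "finite (pts l0)" using pts_fin[OF l0(1)] .
    show "\<forall>i\<in>pts l0. finite (lns i - {l0})" using lns_fin unfolding pts_def by auto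
    show "\<forall>i\<in>pts l0. \<forall>j\<in>pts l0. i \<noteq> j \<longrightarrow> (lns i - {l0}) \<inter> (lns j - {l0}) = {}"
      using uniq_line l0(1) unfolding pts_def lns_def by blast
  qed
  also have "\<dots> = (\<Sum>q\<in>pts l0. t)"
  proof (rule sum.cong)
    fix q assume "q \<in> pts l0"
    hence "q\<in>P" "l0 \<in> lns q" using l0 unfolding pts_def lns_def by auto
    thus "card (lns q - {l0}) = t" using lns_card lns_fin by simp
  qed simp
  also have "\<dots> = (s+1)*t" using pts_card[OF l0(1)] by simp
  finally have "card (L - {l0}) = (s+1)*t" using eq by simp
  moreover have "card L > 0" using l0(1) L_fin card_gt_0_iff by blast
  ultimately show ?thesis using l0(1) L_fin by (simp add: card_Diff_singleton_if)
qed

abbreviation adj where "adj \<equiv> point_graph_adj P L I"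

lemma adj_iff: "adj p q \<longleftrightarrow> p\<in>P \<and> q\<in>P \<and> p\<noteq>q \<and> (\<exists>l\<in>L. I p l \<and> I q l)"
  unfolding point_graph_adj_def by simp

lemma adj_sym: "adj p q \<Longrightarrow> adj q p" unfolding adj_iff by blast

lemma meet_count:
  assumes p: "p\<in>P" and l: "l\<in>L" and npl: "\<not> I p l"
  shows "card {q\<in>pts l. adj p q} = t+1"
proof -
  let ?S = "{q\<in>pts l. adj p q}"
  have fS: "finite ?S" using pts_fin[OF l] by auto
  define g where "g q = (SOME m. m\<in>L \<and> I p m \<and> I q m)" for q
  have g: "g q \<in> L \<and> I p (g q) \<and> I q (g q)" if "q\<in>?S" for q
  proof -
    have "\<exists>m. m\<in>L \<and> I p m \<and> I q m" using that unfolding adj_iff by blast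
    thus ?thesis unfolding g_def by (rule someI_ex)
  qed
  have "inj_on g ?S"
  proof (rule inj_onI)
    fix q q' assume q: "q\<in>?S" and q': "q'\<in>?S" and e: "g q = g q'"
    show "q = q'"
    proof (rule ccontr)
      assume "q \<noteq> q'"
      moreover have "q\<in>P" "q'\<in>P" "I q l" "I q' l" using q q' unfolding pts_def by auto
      ultimately have "l = g q" using uniq_line[of q q' l "g q"] g[OF q] g[OF q'] e l by auto
      thus False using g[OF q] npl by auto
    qed
  qed
  moreover have "g ` ?S \<subseteq> lns p" using g unfolding lns_def by auto
  ultimately have le: "card ?S \<le> t+1"
    using card_inj_on_le[OF _ _ lns_fin[OF p]] lns_card[OF p] by metis
  define h where "h m = (SOME q. q\<in>P \<and> I q m \<and> I q l)" for m
  have h: "h m \<in> P \<and> I (h m) m \<and> I (h m) l" if "m \<in> lns p" for m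
  proof -
    have "\<exists>q. q\<in>P \<and> I q m \<and> I q l" using all_meet[OF p l npl] that unfolding lns_def by blast
    thus ?thesis unfolding h_def by (rule someI_ex)
  qed
  have "inj_on h (lns p)"
  proof (rule inj_onI)
    fix m m' assume m: "m\<in>lns p" and m': "m'\<in>lns p" and e: "h m = h m'"
    have "h m \<noteq> p" using h[OF m] npl by auto
    thus "m = m'" using uniq_line[of p "h m" m m'] h[OF m] h[OF m'] e m m' p
      unfolding lns_def by auto
  qed
  moreover have "h ` lns p \<subseteq> ?S"
  proof
    fix q assume "q \<in> h ` lns p"
    then obtain m where m: "m\<in>lns p" "q = h m" by blast
    have "q \<noteq> p" using h[OF m(1)] npl m(2) by auto
    thus "q \<in> ?S" using h[OF m(1)] m p unfolding lns_def pts_def adj_iff by auto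
  qed
  ultimately have "card (lns p) \<le> card ?S" using card_inj_on_le[OF _ _ fS] by metis
  thus ?thesis using le lns_card[OF p] by simp
qed


lemma main:
  assumes sge: "s \<ge> 2*t+1" and ec: "n_ec 3 P adj"
  shows "(int s)^2 - (int t^3 + 2 * int t^2 + 2 * int t) * int s
           + 2 * int t^4 + 4 * int t^3 + int t^2 - int t \<le> 0"
proof -
  have ec': "\<exists>z\<in>P - (A \<union> B). (\<forall>a\<in>A. adj z a) \<and> (\<forall>b\<in>B. \<not> adj z b)"
    if "A \<subseteq> P" "B \<subseteq> P" "A \<inter> B = {}" "finite (A \<union> B)" "card (A \<union> B) = 3" for A B
    using ec that unfolding n_ec_def by blast
  obtain p0 where p0: "p0\<in>P" using Pne by blast
  obtain l0 where l0: "l0\<in>L" "I p0 l0" using lns_ne[OF p0] by blast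
  have "3 \<le> card P"
  proof -
    have "pts l0 \<subseteq> P" unfolding pts_def by auto
    hence "card (pts l0) \<le> card P" using P_fin card_mono by blast
    thus ?thesis using pts_card[OF l0(1)] s2 by simp
  qed
  then obtain B where B: "B \<subseteq> P" "card B = 3" "finite B" by (rule obtain_subset_with_card_n)
  obtain y where y: "y \<in> P - B" "\<forall>b\<in>B. \<not> adj y b"
    using ec'[of "{}" B] B by auto
  obtain x where xB: "x \<in> B" using B(2) by fastforce
  have x: "x\<in>P" using xB B by auto
  have xy: "x \<noteq> y" using xB y by auto
  have nc: "\<not> I y l" if "l\<in>L" "I x l" for l
    using y xB x xy that unfolding adj_iff by auto
  have nadjxy: "\<not> adj x y" "\<not> adj y x" using nc unfolding adj_iff by blast+
  have yP: "y \<in> P" using y by auto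
  define N where "N z = {q\<in>P. adj z q}" for z
  define C where "C = N x \<inter> N y"
  define Z0 where "Z0 = P - ({x,y} \<union> N x \<union> N y)"
  have NP: "N z \<subseteq> P" for z unfolding N_def by auto
  have finN: "finite (N z)" for z using NP P_fin finite_subset by blast
  have finC: "finite C" unfolding C_def using finN by auto
  have CP: "C \<subseteq> P" unfolding C_def using NP by auto
  have cN: "card (N z) \<le> (t+1)*s" if z: "z\<in>P" for z
  proof -
    have "N z \<subseteq> (\<Union>l\<in>lns z. pts l - {z})"
      unfolding N_def adj_iff lns_def pts_def by blast
    hence "card (N z) \<le> card (\<Union>l\<in>lns z. pts l - {z})"
      using lns_fin[OF z] pts_fin unfolding lns_def by (intro card_mono) auto
    also have "\<dots> \<le> (\<Sum>l\<in>lns z. card (pts l - {z}))" by (rule card_UN_le[OF lns_fin[OF z]])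
    also have "\<dots> = (\<Sum>l\<in>lns z. s)"
    proof (rule sum.cong)
      fix l assume "l \<in> lns z"
      hence "l\<in>L" "z \<in> pts l" using z unfolding lns_def pts_def by auto
      thus "card (pts l - {z}) = s" using pts_card pts_fin by simp
    qed simp
    also have "\<dots> = (t+1)*s" using lns_card[OF z] by simp
    finally show ?thesis .
  qed
  have cC: "card C = (t+1)^2"
  proof -
    have eq: "C = (\<Union>l\<in>lns x. {q\<in>pts l. adj y q})"
    proof
      show "C \<subseteq> (\<Union>l\<in>lns x. {q\<in>pts l. adj y q})"
        unfolding C_def N_def adj_iff lns_def pts_def by blast
      show "(\<Union>l\<in>lns x. {q\<in>pts l. adj y q}) \<subseteq> C"
      proof
        fix q assume "q \<in> (\<Union>l\<in>lns x. {q\<in>pts l. adj y q})"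
        then obtain l where l: "l\<in>L" "I x l" "q\<in>P" "I q l" "adj y q"
          unfolding lns_def pts_def by blast
        have "q \<noteq> x" using l(5) nadjxy by auto
        thus "q \<in> C" using l x unfolding C_def N_def adj_iff by auto
      qed
    qed
    have "card (\<Union>l\<in>lns x. {q\<in>pts l. adj y q}) = (\<Sum>l\<in>lns x. card {q\<in>pts l. adj y q})"
    proof (rule card_UN_disjoint)
      show "finite (lns x)" using lns_fin[OF x] .
      show "\<forall>i\<in>lns x. finite {q\<in>pts i. adj y q}" using pts_fin unfolding lns_def by auto
      show "\<forall>i\<in>lns x. \<forall>j\<in>lns x. i \<noteq> j \<longrightarrow> {q\<in>pts i. adj y q} \<inter> {q\<in>pts j. adj y q} = {}"
      proof (intro ballI impI)
        fix i j assume i: "i\<in>lns x" and j: "j\<in>lns x" and ij: "i\<noteq>j"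
        show "{q\<in>pts i. adj y q} \<inter> {q\<in>pts j. adj y q} = {}"
        proof (rule ccontr)
          assume "\<not> ?thesis"
          then obtain q where q: "q\<in>P" "I q i" "I q j" "adj y q" unfolding pts_def by blast
          have "q \<noteq> x" using q(4) nadjxy by auto
          thus False using uniq_line[of x q i j] q i j x ij unfolding lns_def by auto
        qed
      qed
    qed
    also have "\<dots> = (\<Sum>l\<in>lns x. t+1)"
    proof (rule sum.cong)
      fix l assume "l\<in>lns x"
      hence "l\<in>L" "I x l" unfolding lns_def by auto
      thus "card {q\<in>pts l. adj y q} = t+1" using meet_count[OF yP] nc by blast
    qed simp
    also have "\<dots> = (t+1)^2" using lns_card[OF x] by (simp add: power2_eq_square)
    finally show ?thesis using eq by simp
  qed
  have cZ0: "int (card Z0) = int (card P) - 2 - int (card (N x)) - int (card (N y)) + int (card C)"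
  proof -
    have d: "{x,y} \<inter> (N x \<union> N y) = {}" using nadjxy unfolding N_def adj_iff by auto
    have u: "card ({x,y} \<union> N x \<union> N y) = 2 + card (N x \<union> N y)"
      using card_Un_disjoint[OF _ _ d] finN xy by (simp add: Un_assoc)
    have ui: "card (N x) + card (N y) = card (N x \<union> N y) + card C"
      unfolding C_def by (rule card_Un_Int[OF finN finN])
    have sub: "{x,y} \<union> N x \<union> N y \<subseteq> P" using x yP NP by auto
    have "card Z0 = card P - card ({x,y} \<union> N x \<union> N y)"
      unfolding Z0_def by (rule card_Diff_subset[OF _ sub]) (use finN in auto)
    moreover have "card ({x,y} \<union> N x \<union> N y) \<le> card P" by (rule card_mono[OF P_fin sub])
    ultimately show ?thesis using u ui by linarith
  qed
  have seeC: "\<exists>w\<in>C. adj w z" if z: "z \<in> Z0" for z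
  proof -
    have zP: "z\<in>P" "z\<noteq>x" "z\<noteq>y" using z unfolding Z0_def by auto
    have c3: "card {x,y,z} = 3" using xy zP by auto
    obtain w where w: "w \<in> P - ({x,y,z} \<union> {})" "\<forall>a\<in>{x,y,z}. adj w a"
      using ec'[of "{x,y,z}" "{}"] x yP zP c3 by auto
    have "w \<in> C" using w adj_sym unfolding C_def N_def by auto
    thus ?thesis using w by auto
  qed
  define M where "M = {m\<in>L. \<not> I x m \<and> \<not> I y m \<and> (\<exists>w\<in>C. I w m)}"
  define c where "c m = card (C \<inter> pts m)" for m
  have finM: "finite M" unfolding M_def using L_fin by auto
  have Zcov: "Z0 \<subseteq> (\<Union>m\<in>M. pts m \<inter> Z0)"
  proof
    fix z assume z: "z\<in>Z0"
    obtain w where w: "w\<in>C" "adj w z" using seeC[OF z] by blast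
    obtain m where m: "m\<in>L" "I w m" "I z m" using w(2) unfolding adj_iff by blast
    have zP: "z\<in>P" "z\<noteq>x" "z\<noteq>y" "\<not> adj x z" "\<not> adj y z" using z unfolding Z0_def N_def by auto
    have "\<not> I x m" using zP m x unfolding adj_iff by blast
    moreover have "\<not> I y m" using zP m yP unfolding adj_iff by blast
    ultimately have "m \<in> M" using m w unfolding M_def by auto
    thus "z \<in> (\<Union>m\<in>M. pts m \<inter> Z0)" using z zP m unfolding pts_def by auto
  qed
  have c1: "int (card Z0) \<le> (\<Sum>m\<in>M. int (card (pts m \<inter> Z0)))"
  proof -
    have "card Z0 \<le> card (\<Union>m\<in>M. pts m \<inter> Z0)"
      using Zcov finM pts_fin unfolding M_def by (intro card_mono) auto
    also have "\<dots> \<le> (\<Sum>m\<in>M. card (pts m \<inter> Z0))" by (rule card_UN_le[OF finM])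
    finally show ?thesis by (simp flip: of_nat_sum)
  qed
  have c2: "int (card (pts m \<inter> Z0)) = int s + 1 - 2*(int t+1) + int (c m)" if m: "m\<in>M" for m
  proof -
    have mL: "m\<in>L" "\<not> I x m" "\<not> I y m" using m unfolding M_def by auto
    have e: "pts m \<inter> Z0 = pts m - (pts m \<inter> (N x \<union> N y))"
      using mL unfolding Z0_def pts_def by auto
    have ex: "card (pts m \<inter> N x) = t+1"
    proof -
      have "pts m \<inter> N x = {q\<in>pts m. adj x q}" unfolding N_def pts_def by auto
      thus ?thesis using meet_count[OF x mL(1,2)] by simp
    qed
    have ey: "card (pts m \<inter> N y) = t+1"
    proof -
      have "pts m \<inter> N y = {q\<in>pts m. adj y q}" unfolding N_def pts_def by auto
      thus ?thesis using meet_count[OF yP mL(1,3)] by simp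
    qed
    have fm: "finite (pts m)" using pts_fin[OF mL(1)] .
    have ui: "card (pts m \<inter> N x) + card (pts m \<inter> N y)
        = card (pts m \<inter> (N x \<union> N y)) + c m"
    proof -
      have "card (pts m \<inter> N x) + card (pts m \<inter> N y)
        = card ((pts m \<inter> N x) \<union> (pts m \<inter> N y)) + card ((pts m \<inter> N x) \<inter> (pts m \<inter> N y))"
        by (rule card_Un_Int) (use fm in auto)
      moreover have "(pts m \<inter> N x) \<union> (pts m \<inter> N y) = pts m \<inter> (N x \<union> N y)" by auto
      moreover have "(pts m \<inter> N x) \<inter> (pts m \<inter> N y) = C \<inter> pts m" unfolding C_def by auto
      ultimately show ?thesis unfolding c_def by simp
    qed
    have "card (pts m \<inter> Z0) = card (pts m) - card (pts m \<inter> (N x \<union> N y))"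
      unfolding e by (rule card_Diff_subset) (use fm in auto)
    moreover have "card (pts m \<inter> (N x \<union> N y)) \<le> card (pts m)"
      by (rule card_mono[OF fm]) auto
    ultimately have z: "card (pts m \<inter> Z0) + card (pts m \<inter> (N x \<union> N y)) = s+1"
      using pts_card[OF mL(1)] by simp
    have a: "card (pts m \<inter> (N x \<union> N y)) + c m = 2*(t+1)" using ui ex ey by simp
    have h1: "card (pts m \<inter> Z0) + 2*(t+1) = s + 1 + c m"
      using z a by linarith
    hence "int (card (pts m \<inter> Z0) + 2*(t+1)) = int (s + 1 + c m)" by (rule arg_cong)
    thus ?thesis by simp
  qed
  have dc: "(\<Sum>m\<in>M. c m) = (\<Sum>w\<in>C. card {m\<in>M. I w m})"
  proof -
    have "(\<Sum>m\<in>M. c m) = (\<Sum>m\<in>M. card {w\<in>C. I w m})"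
      unfolding c_def pts_def using CP by (intro sum.cong) (auto intro!: arg_cong[where f=card])
    also have "\<dots> = (\<Sum>w\<in>C. card {m\<in>M. I w m})" by (rule double_count[OF finM finC])
    finally show ?thesis .
  qed
  have c3: "card {m\<in>M. I w m} \<le> t - 1" if w: "w\<in>C" for w
  proof -
    have wN: "adj x w" "adj y w" "w\<in>P" using w unfolding C_def N_def by auto
    obtain lx where lx: "lx\<in>L" "I x lx" "I w lx" using wN(1) unfolding adj_iff by blast
    obtain ly where ly: "ly\<in>L" "I y ly" "I w ly" using wN(2) unfolding adj_iff by blast
    have ne: "lx \<noteq> ly" using nc lx ly by auto
    have "{m\<in>M. I w m} \<subseteq> lns w - {lx, ly}" using lx ly unfolding M_def lns_def by auto
    hence "card {m\<in>M. I w m} \<le> card (lns w - {lx, ly})"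
      using lns_fin[OF wN(3)] by (intro card_mono) auto
    also have "\<dots> = t - 1"
    proof -
      have "{lx,ly} \<subseteq> lns w" using lx ly unfolding lns_def by auto
      hence "card (lns w - {lx,ly}) = card (lns w) - card {lx,ly}"
        using lns_fin[OF wN(3)] by (intro card_Diff_subset) auto
      thus ?thesis using lns_card[OF wN(3)] ne by simp
    qed
    finally show ?thesis .
  qed
  have sumc: "(\<Sum>m\<in>M. c m) \<le> (t+1)^2 * (t-1)"
  proof -
    have "(\<Sum>w\<in>C. card {m\<in>M. I w m}) \<le> (\<Sum>w\<in>C. t - 1)" by (rule sum_mono) (use c3 in auto)
    thus ?thesis using dc cC by simp
  qed
  have cM: "card M \<le> (\<Sum>m\<in>M. c m)"
  proof -
    have "c m \<ge> 1" if mM: "m\<in>M" for m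
    proof -
      obtain w where "w\<in>C" "I w m" using mM unfolding M_def by blast
      hence "w \<in> C \<inter> pts m" using CP unfolding pts_def by auto
      hence "C \<inter> pts m \<noteq> {}" by auto
      thus ?thesis unfolding c_def using finC by (simp add: Suc_le_eq card_gt_0_iff)
    qed
    hence "(\<Sum>m\<in>M. (1::nat)) \<le> (\<Sum>m\<in>M. c m)" by (intro sum_mono) auto
    thus ?thesis by simp
  qed
  define S where "S = int s"
  define T where "T = int t"
  define K where "K = int (\<Sum>m\<in>M. c m)"
  have "int (card Z0) \<le> (\<Sum>m\<in>M. S + 1 - 2*(T+1) + int (c m))"
    using c1 c2 unfolding S_def T_def by (metis (no_types, lifting) sum.cong)
  also have "\<dots> = (\<Sum>m\<in>M. (S - 2*T - 1)) + (\<Sum>m\<in>M. int (c m))"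
    by (subst sum.distrib[symmetric]) (rule sum.cong, auto)
  also have "\<dots> = int (card M) * (S - 2*T - 1) + K"
    unfolding K_def by (simp add: of_nat_sum)
  also have "\<dots> \<le> K * (S - 2*T - 1) + K"
  proof -
    have "S - 2*T - 1 \<ge> 0" using sge unfolding S_def T_def by simp
    moreover have "int (card M) \<le> K" using cM unfolding K_def by (simp only: of_nat_le_iff)
    ultimately show ?thesis by (simp add: mult_right_mono)
  qed
  also have "\<dots> = K * (S - 2*T)" by (simp add: algebra_simps)
  also have "\<dots> \<le> (T+1)^2*(T-1) * (S - 2*T)"
  proof -
    have "K \<le> int ((t+1)^2*(t-1))" using sumc unfolding K_def by (simp only: of_nat_le_iff)
    also have "int ((t+1)^2*(t-1)) = (T+1)^2*(T-1)" using t1 unfolding T_def by (simp add: of_nat_diff)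
    finally have "K \<le> (T+1)^2*(T-1)" .
    moreover have "S - 2*T \<ge> 0" using sge unfolding S_def T_def by simp
    ultimately show ?thesis by (simp add: mult_right_mono)
  qed
  finally have A: "int (card Z0) \<le> (T+1)^2*(T-1) * (S - 2*T)" .
  have nx: "int (card (N x)) \<le> (T+1)*S"
  proof -
    have "int (card (N x)) \<le> int ((t+1)*s)" using cN[OF x] by (simp only: of_nat_le_iff)
    thus ?thesis unfolding S_def T_def by (simp add: algebra_simps)
  qed
  have ny: "int (card (N y)) \<le> (T+1)*S"
  proof -
    have "int (card (N y)) \<le> int ((t+1)*s)" using cN[OF yP] by (simp only: of_nat_le_iff)
    thus ?thesis unfolding S_def T_def by (simp add: algebra_simps)
  qed
  have ncC: "int (card C) = (T+1)^2" using cC unfolding T_def by simp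
  have B: "int (card Z0) \<ge> int (card P) - 2 - 2*(T+1)*S + (T+1)^2"
    using cZ0 nx ny ncC by linarith
  have Pc: "int (card P) * (T+1) = (1 + (S+1)*T) * (S+1)"
  proof -
    have "card P * (t+1) = (1+(s+1)*t) * (s+1)" using incid L_card by simp
    hence "int (card P * (t+1)) = int ((1+(s+1)*t) * (s+1))" by simp
    thus ?thesis unfolding S_def T_def by (simp add: algebra_simps)
  qed
  define f where "f = S^2 - (T^3 + 2*T^2 + 2*T)*S + 2*T^4 + 4*T^3 + T^2 - T"
  have id: "T * f = (T+1) * (int (card P) - 2 - 2*(T+1)*S + (T+1)^2 - (T+1)^2*(T-1)*(S - 2*T))"
  proof -
    have "(T+1) * (int (card P) - 2 - 2*(T+1)*S + (T+1)^2 - (T+1)^2*(T-1)*(S - 2*T))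
      = (1 + (S+1)*T) * (S+1) - (T+1)*(2 + 2*(T+1)*S - (T+1)^2 + (T+1)^2*(T-1)*(S - 2*T))"
    proof -
      have "(T+1) * (int (card P) - 2 - 2*(T+1)*S + (T+1)^2 - (T+1)^2*(T-1)*(S - 2*T))
        = int (card P) * (T+1) - (T+1)*(2 + 2*(T+1)*S - (T+1)^2 + (T+1)^2*(T-1)*(S - 2*T))"
        by algebra
      thus ?thesis unfolding Pc .
    qed
    also have "\<dots> = T * f" unfolding f_def by algebra
    finally show ?thesis by simp
  qed
  have "T * f \<le> 0"
  proof -
    have "int (card P) - 2 - 2*(T+1)*S + (T+1)^2 - (T+1)^2*(T-1)*(S - 2*T) \<le> 0" using A B by linarith
    moreover have "T + 1 \<ge> 0" unfolding T_def by simp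
    ultimately show ?thesis unfolding id by (simp add: mult_nonneg_nonpos)
  qed
  moreover have "T > 0" using t1 unfolding T_def by simp
  ultimately have "f \<le> 0" by (simp add: mult_le_0_iff)
  thus ?thesis unfolding f_def S_def T_def .
qed

end

theorem mainTheorem12:
  fixes P :: "'a set" and L :: "'b set" and I :: "'a \<Rightarrow> 'b \<Rightarrow> bool" and s t :: nat
  assumes "nondegenerate_pg P L I s t (t + 1)"
    and "s \<ge> 2 * t + 1"
    and "n_ec 3 P (point_graph_adj P L I)"
  shows "(int s)^2 - (int t^3 + 2 * int t^2 + 2 * int t) * int s
           + 2 * int t^4 + 4 * int t^3 + int t^2 - int t \<le> 0"
proof -
  interpret pgt P L I s t using assms(1) unfolding nondegenerate_pg_def by unfold_locales auto
  show ?thesis using main assms(2,3) by blast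
qed

end
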